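(* For any integers $s,k\geq 2$, we have $\chi(\overline{K}(sk,k))\leq h_o(\overline{K}(sk,k))$, and $\overline{K}(sk,k)$ contains a strongly $1$-shallow $K_t$-minor with $t=\chi(\overline{K}(sk,k))$.
   Context: For integers $n\ge 2k\ge 4$, $\overline{K}(n,k)$ is the complement of the Kneser graph: its vertices are the $k$-element subsets of $[n]=\{1,\dots,n\}$, two distinct ones adjacent iff they intersect. $\chi$ is chromatic number. A $K_t$-minor of a graph $G$ is given by $t$ pairwise vertex-disjoint connected subgraphs (bags), any two joined by an edge of $G$. A star is $K_{1,s}$, $s\ge1$. A $K_t$-minor is strongly $1$-shallow if each bag is a single vertex or a star, and every two bags are joined by an edge each of whose endpoints is either the unique vertex of a single-vertex bag or a leaf of a star bag. Signed graphs: $(G,\sigma)$ with $\sigma:E(G)\to\{+,-\}$; switching at $x$ flips signs of edges at $x$. $(H,\pi)$ is a minor of $(G,\sigma)$ if for some $\tau$ switching equivalent to $\sigma$ there are disjoint subgraphs $B_x$ ($x\in V(H)$) whose $\tau$-positive edges span each $B_x$ connectedly, and for each edge $xy$ of $H$ an edge $uv$ with $u\in B_x,v\in B_y$ and $\tau(uv)=\pi(xy)$. $h_o(G)$ is the largest $t$ such that $(K_t,-)$ (all edges negative) is a minor of $(G,-)$. *)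

theory Defs
  imports Main
begin

text \<open>Simple graphs are given by a vertex set V and a symmetric irreflexive
adjacency relation E.\<close>

definition kneser_compl_vertices :: "nat \<Rightarrow> nat \<Rightarrow> nat set set" where
  "kneser_compl_vertices n k = {A. A \<subseteq> {1..n} \<and> card A = k}"

definition kneser_compl_adj :: "nat set \<Rightarrow> nat set \<Rightarrow> bool" where
  "kneser_compl_adj A B \<longleftrightarrow> A \<noteq> B \<and> A \<inter> B \<noteq> {}"

definition proper_colouring :: "'a set \<Rightarrow> ('a \<Rightarrow> 'a \<Rightarrow> bool) \<Rightarrow> nat \<Rightarrow> ('a \<Rightarrow> nat) \<Rightarrow> bool" where
  "proper_colouring V E c f \<longleftrightarrow>
     (\<forall>v\<in>V. f v < c) \<and> (\<forall>u\<in>V. \<forall>v\<in>V. E u v \<longrightarrow> f u \<noteq> f v)"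

definition chromatic_number :: "'a set \<Rightarrow> ('a \<Rightarrow> 'a \<Rightarrow> bool) \<Rightarrow> nat" where
  "chromatic_number V E = (LEAST c. \<exists>f. proper_colouring V E c f)"

definition connected_in :: "'a set \<Rightarrow> ('a \<Rightarrow> 'a \<Rightarrow> bool) \<Rightarrow> bool" where
  "connected_in S R \<longleftrightarrow> S \<noteq> {} \<and>
     (\<forall>u\<in>S. \<forall>v\<in>S. (\<lambda>a b. a \<in> S \<and> b \<in> S \<and> R a b)\<^sup>*\<^sup>* u v)"

text \<open>Signs: True = positive, False = negative. Switching at the vertex set
{x. s x} turns the signature sigma into the signature switched_sign sigma s.\<close>
definition switched_sign :: "('a \<Rightarrow> 'a \<Rightarrow> bool) \<Rightarrow> ('a \<Rightarrow> bool) \<Rightarrow> 'a \<Rightarrow> 'a \<Rightarrow> bool" where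
  "switched_sign \<sigma> s u v \<longleftrightarrow> (\<sigma> u v \<longleftrightarrow> (s u \<longleftrightarrow> s v))"

definition signed_minor ::
  "'b set \<Rightarrow> ('b \<Rightarrow> 'b \<Rightarrow> bool) \<Rightarrow> ('b \<Rightarrow> 'b \<Rightarrow> bool) \<Rightarrow>
   'a set \<Rightarrow> ('a \<Rightarrow> 'a \<Rightarrow> bool) \<Rightarrow> ('a \<Rightarrow> 'a \<Rightarrow> bool) \<Rightarrow> bool" where
  "signed_minor VH EH \<pi> VG EG \<sigma> \<longleftrightarrow>
    (\<exists>s B. (\<forall>x\<in>VH. B x \<subseteq> VG \<and>
                     connected_in (B x) (\<lambda>u v. EG u v \<and> switched_sign \<sigma> s u v)) \<and>
           (\<forall>x\<in>VH. \<forall>y\<in>VH. x \<noteq> y \<longrightarrow> B x \<inter> B y = {}) \<and>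
           (\<forall>x\<in>VH. \<forall>y\<in>VH. EH x y \<longrightarrow>
               (\<exists>u\<in>B x. \<exists>v\<in>B y. EG u v \<and> switched_sign \<sigma> s u v = \<pi> x y)))"

definition odd_hadwiger :: "'a set \<Rightarrow> ('a \<Rightarrow> 'a \<Rightarrow> bool) \<Rightarrow> nat" where
  "odd_hadwiger V E = (GREATEST t.
     signed_minor {..<t} (\<lambda>x y. x \<noteq> y) (\<lambda>_ _. False) V E (\<lambda>_ _. False))"

text \<open>Bag i consists of a vertex c i and a set
L i of leaves; L i = {} means a single-vertex bag {c i}, otherwise the bag is the
star with centre c i and leaves L i (so s = card (L i) \<ge> 1).\<close>
definition bag_ports :: "'a \<Rightarrow> 'a set \<Rightarrow> 'a set" where
  "bag_ports c L = (if L = {} then {c} else L)"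

definition strongly_1_shallow_minor :: "'a set \<Rightarrow> ('a \<Rightarrow> 'a \<Rightarrow> bool) \<Rightarrow> nat \<Rightarrow> bool" where
  "strongly_1_shallow_minor V E t \<longleftrightarrow>
    (\<exists>(c :: nat \<Rightarrow> 'a) (L :: nat \<Rightarrow> 'a set).
       (\<forall>i<t. c i \<in> V \<and> L i \<subseteq> V \<and> finite (L i) \<and> c i \<notin> L i \<and> (\<forall>l\<in>L i. E (c i) l)) \<and>
       (\<forall>i<t. \<forall>j<t. i \<noteq> j \<longrightarrow> (insert (c i) (L i)) \<inter> (insert (c j) (L j)) = {}) \<and>
       (\<forall>i<t. \<forall>j<t. i \<noteq> j \<longrightarrow>
          (\<exists>u\<in>bag_ports (c i) (L i). \<exists>v\<in>bag_ports (c j) (L j). E u v)))"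

end

theory Submission
  imports Defs
begin

lemma hall_cap:
  fixes J :: "'a set" and N :: "'a \<Rightarrow> 'b set" and d :: "'b \<Rightarrow> nat"
  assumes "finite J" "\<forall>j\<in>J. finite (N j)" "\<forall>X\<subseteq>J. card X \<le> sum d (\<Union>(N ` X))"
  shows "\<exists>\<phi>. (\<forall>j\<in>J. \<phi> j \<in> N j) \<and> (\<forall>y. card {j\<in>J. \<phi> j = y} \<le> d y)"
  using assms
proof (induction "card J" arbitrary: J N d rule: less_induct)
  case less
  note fJ = less.prems(1) and fN = less.prems(2) and H = less.prems(3)
  have fU: "finite (\<Union>(N ` X))" if "X \<subseteq> J" for X
    using that fN finite_subset[OF that fJ] by auto
  show ?case
  proof (cases "J = {}")
    case True
    then show ?thesis by auto
  next
    case Jne: False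
    show ?thesis
    proof (cases "\<exists>X. X \<subseteq> J \<and> X \<noteq> {} \<and> X \<noteq> J \<and> sum d (\<Union>(N ` X)) \<le> card X")
      case True
      then obtain X where X: "X \<subseteq> J" "X \<noteq> {}" "X \<noteq> J" "sum d (\<Union>(N ` X)) \<le> card X" by blast
      define Z where "Z = \<Union>(N ` X)"
      have fX: "finite X" using X(1) fJ finite_subset by blast
      have cX: "card X < card J" using X fJ by (simp add: psubsetI psubset_card_mono)
      obtain \<phi>1 where p1: "\<forall>j\<in>X. \<phi>1 j \<in> N j" "\<forall>y. card {j\<in>X. \<phi>1 j = y} \<le> d y"
      proof -
        have a: "\<forall>j\<in>X. finite (N j)" using fN X(1) by blast
        have b: "\<forall>Y\<subseteq>X. card Y \<le> sum d (\<Union>(N ` Y))" using H X(1) by blast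
        show ?thesis using less.hyps[OF cX fX a b] that by blast
      qed
      define N' where "N' = (\<lambda>j. N j - Z)"
      have cJX: "card (J - X) < card J" using X fJ
      proof -
        have "J - X \<subset> J" using X(1,2) by blast
        then show ?thesis using fJ by (simp add: psubset_card_mono)
      qed
      have H2: "\<forall>Y\<subseteq>J - X. card Y \<le> sum d (\<Union>(N' ` Y))"
      proof (intro allI impI)
        fix Y assume Y: "Y \<subseteq> J - X"
        have fY: "finite Y" using Y fJ finite_subset by blast
        have "card X + card Y = card (X \<union> Y)"
          using Y fX fY by (subst card_Un_disjoint) auto
        also have "\<dots> \<le> sum d (\<Union>(N ` (X \<union> Y)))" using H Y X(1) by (metis Un_subset_iff Diff_subset subset_trans)
        also have "\<Union>(N ` (X \<union> Y)) = Z \<union> \<Union>(N' ` Y)" unfolding Z_def N'_def by auto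
        also have "sum d (Z \<union> \<Union>(N' ` Y)) = sum d Z + sum d (\<Union>(N' ` Y))"
        proof (rule sum.union_disjoint)
          show "finite Z" unfolding Z_def using fU X(1) by blast
          show "finite (\<Union>(N' ` Y))" unfolding N'_def using fU[of Y] Y by auto
          show "Z \<inter> \<Union>(N' ` Y) = {}" unfolding N'_def by auto
        qed
        finally show "card Y \<le> sum d (\<Union>(N' ` Y))" using X(4) unfolding Z_def by linarith
      qed
      obtain \<phi>2 where p2: "\<forall>j\<in>J - X. \<phi>2 j \<in> N' j" "\<forall>y. card {j\<in>J - X. \<phi>2 j = y} \<le> d y"
      proof -
        have a: "finite (J - X)" using fJ by blast
        have b: "\<forall>j\<in>J - X. finite (N' j)" using fN unfolding N'_def by blast
        show ?thesis using less.hyps[OF cJX a b H2] that by blast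
      qed
      define \<phi> where "\<phi> = (\<lambda>j. if j \<in> X then \<phi>1 j else \<phi>2 j)"
      have "\<forall>j\<in>J. \<phi> j \<in> N j" using p1 p2 unfolding \<phi>_def N'_def by auto
      moreover have "card {j\<in>J. \<phi> j = y} \<le> d y" for y
      proof (cases "y \<in> Z")
        case True
        have "{j\<in>J. \<phi> j = y} = {j\<in>X. \<phi>1 j = y}"
        proof (intro set_eqI iffI)
          fix j assume "j \<in> {j\<in>J. \<phi> j = y}"
          then have j: "j \<in> J" "\<phi> j = y" by auto
          show "j \<in> {j\<in>X. \<phi>1 j = y}"
          proof (cases "j \<in> X")
            case True then show ?thesis using j unfolding \<phi>_def by simp
          next
            case False
            then have "\<phi>2 j \<notin> Z" using p2(1) j(1) unfolding N'_def by blast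
            then show ?thesis using j False \<open>y \<in> Z\<close> unfolding \<phi>_def by simp
          qed
        qed (use X(1) in \<open>auto simp: \<phi>_def\<close>)
        then show ?thesis using p1(2) by simp
      next
        case False
        have "{j\<in>J. \<phi> j = y} = {j\<in>J - X. \<phi>2 j = y}"
        proof (intro set_eqI iffI)
          fix j assume "j \<in> {j\<in>J. \<phi> j = y}"
          then have j: "j \<in> J" "\<phi> j = y" by auto
          show "j \<in> {j\<in>J - X. \<phi>2 j = y}"
          proof (cases "j \<in> X")
            case True
            then have "\<phi>1 j \<in> Z" using p1(1) unfolding Z_def by blast
            then show ?thesis using j True \<open>y \<notin> Z\<close> unfolding \<phi>_def by simp
          next
            case False
            then show ?thesis using j unfolding \<phi>_def by simp
          qed
        qed (auto simp: \<phi>_def)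
        then show ?thesis using p2(2) by simp
      qed
      ultimately show ?thesis by blast
    next
      case False
      then have strict: "\<And>X. X \<subseteq> J \<Longrightarrow> X \<noteq> {} \<Longrightarrow> X \<noteq> J \<Longrightarrow> card X < sum d (\<Union>(N ` X))"
        by (meson not_le)
      obtain j0 where j0: "j0 \<in> J" using Jne by blast
      have "card {j0} \<le> sum d (\<Union>(N ` {j0}))" using H j0 by blast
      then have "1 \<le> sum d (N j0)" by simp
      then obtain y where y: "y \<in> N j0" "d y > 0"
        by (metis not_one_le_zero not_gr0 sum.neutral)
      define d' where "d' = d(y := d y - 1)"
      have cJ': "card (J - {j0}) < card J" using j0 fJ by (metis card_Diff1_less)
      have H2: "\<forall>X\<subseteq>J - {j0}. card X \<le> sum d' (\<Union>(N ` X))"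
      proof (intro allI impI)
        fix X assume X: "X \<subseteq> J - {j0}"
        show "card X \<le> sum d' (\<Union>(N ` X))"
        proof (cases "X = {}")
          case True then show ?thesis by simp
        next
          case False
          have lt: "card X < sum d (\<Union>(N ` X))" using strict[of X] X False j0 by auto
          have fT: "finite (\<Union>(N ` X))" using fU[of X] X by auto
          show ?thesis
          proof (cases "y \<in> \<Union>(N ` X)")
            case True
            have "sum d (\<Union>(N ` X)) = d y + sum d (\<Union>(N ` X) - {y})"
              using sum.remove[OF fT True] by simp
            moreover have "sum d' (\<Union>(N ` X)) = d' y + sum d' (\<Union>(N ` X) - {y})"
              using sum.remove[OF fT True] by simp
            moreover have "sum d' (\<Union>(N ` X) - {y}) = sum d (\<Union>(N ` X) - {y})"
              unfolding d'_def by (rule sum.cong) auto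
            ultimately show ?thesis using lt y(2) unfolding d'_def by simp
          next
            case False
            have "sum d' (\<Union>(N ` X)) = sum d (\<Union>(N ` X))"
              unfolding d'_def using False by (intro sum.cong) auto
            then show ?thesis using lt by simp
          qed
        qed
      qed
      obtain \<phi>' where p: "\<forall>j\<in>J - {j0}. \<phi>' j \<in> N j" "\<forall>z. card {j\<in>J - {j0}. \<phi>' j = z} \<le> d' z"
      proof -
        have a: "finite (J - {j0})" using fJ by blast
        have b: "\<forall>j\<in>J - {j0}. finite (N j)" using fN by blast
        show ?thesis using less.hyps[OF cJ' a b H2] that by blast
      qed
      define \<phi> where "\<phi> = \<phi>'(j0 := y)"
      have "\<forall>j\<in>J. \<phi> j \<in> N j" using p y unfolding \<phi>_def by auto
      moreover have "card {j\<in>J. \<phi> j = z} \<le> d z" for z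
      proof (cases "z = y")
        case True
        have "{j\<in>J. \<phi> j = z} = insert j0 {j\<in>J - {j0}. \<phi>' j = z}"
          using True j0 unfolding \<phi>_def by auto
        moreover have "finite {j\<in>J - {j0}. \<phi>' j = z}" using fJ by auto
        ultimately have "card {j\<in>J. \<phi> j = z} = Suc (card {j\<in>J - {j0}. \<phi>' j = z})" by simp
        then show ?thesis using p(2)[rule_format, of z] True y(2) unfolding d'_def by simp
      next
        case False
        have "{j\<in>J. \<phi> j = z} = {j\<in>J - {j0}. \<phi>' j = z}"
          using False j0 unfolding \<phi>_def by auto
        then show ?thesis using p(2)[rule_format, of z] False unfolding d'_def by simp
      qed
      ultimately show ?thesis by blast
    qed
  qed
qed

definition cnt :: "nat \<Rightarrow> nat \<Rightarrow> nat \<Rightarrow> nat set \<Rightarrow> nat" where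
  "cnt n k m S = (if card S \<le> k then (n - m) choose (k - card S) else 0)"

definition dd :: "nat \<Rightarrow> nat \<Rightarrow> nat \<Rightarrow> nat set \<Rightarrow> nat" where
  "dd n k m S = (if card S < k then (n - m - 1) choose (k - card S - 1) else 0)"

definition good :: "nat \<Rightarrow> nat \<Rightarrow> nat \<Rightarrow> nat \<Rightarrow> (nat \<times> nat \<Rightarrow> nat set) \<Rightarrow> bool" where
  "good s k M m P \<longleftrightarrow>
     (\<forall>\<sigma>\<in>{..<M}\<times>{..<s}. P \<sigma> \<subseteq> {1..m}) \<and>
     (\<forall>j<M. \<forall>i<s. \<forall>i'<s. i \<noteq> i' \<longrightarrow> P (j,i) \<inter> P (j,i') = {}) \<and>
     (\<forall>j<M. (\<Union>i<s. P (j,i)) = {1..m}) \<and>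
     (\<forall>S. S \<subseteq> {1..m} \<longrightarrow> card {\<sigma>\<in>{..<M}\<times>{..<s}. P \<sigma> = S} = cnt (s*k) k m S)"

lemma cnt_dd: "m < n \<Longrightarrow> cnt n k m S * (k - card S) = (n - m) * dd n k m S"
proof (cases "card S < k")
  case True
  assume "m < n"
  have "(k - card S) * ((n - m) choose (k - card S)) = (n - m) * ((n - m - 1) choose (k - card S - 1))"
    using times_binomial_minus1_eq[of "k - card S" "n - m"] True by simp
  then show ?thesis using True unfolding cnt_def dd_def by (simp add: mult.commute)
next
  case False
  then show ?thesis unfolding cnt_def dd_def by simp
qed

lemma cnt_step1: "m < n \<Longrightarrow> cnt n k m S - dd n k m S = cnt n k (Suc m) S"
proof -
  assume mn: "m < n"
  show ?thesis
  proof (cases "card S < k")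
    case True
    have "(n - m) choose (k - card S) = ((n - m - 1) choose (k - card S - 1)) + ((n - m - 1) choose (k - card S))"
      using choose_reduce_nat[of "n - m" "k - card S"] mn True by simp
    then show ?thesis using True unfolding cnt_def dd_def by simp
  next
    case False
    then show ?thesis unfolding cnt_def dd_def by auto
  qed
qed

lemma cnt_step2: "card S = Suc (card T) \<Longrightarrow> dd n k m T = cnt n k (Suc m) S"
  unfolding cnt_def dd_def by auto

lemma good_card_le:
  assumes G: "good s k M m P" and sig: "\<sigma> \<in> {..<M}\<times>{..<s}"
  shows "card (P \<sigma>) \<le> k"
proof (rule ccontr)
  assume nk: "\<not> card (P \<sigma>) \<le> k"
  have sub: "P \<sigma> \<subseteq> {1..m}" using G sig unfolding good_def by blast
  have "card {\<tau>\<in>{..<M}\<times>{..<s}. P \<tau> = P \<sigma>} = 0"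
    using G sub nk unfolding good_def cnt_def by simp
  moreover have "\<sigma> \<in> {\<tau>\<in>{..<M}\<times>{..<s}. P \<tau> = P \<sigma>}" using sig by simp
  moreover have "finite {\<tau>\<in>{..<M}\<times>{..<s}. P \<tau> = P \<sigma>}" by simp
  ultimately show False by (metis card_0_eq empty_iff)
qed

lemma good_row_sum:
  assumes G: "good s k M m P" and j: "j < M"
  shows "(\<Sum>i<s. k - card (P (j,i))) = s * k - m"
proof -
  have fin: "\<forall>i\<in>{..<s}. finite (P (j,i))"
    using G j unfolding good_def by (meson finite_atLeastAtMost finite_subset lessThan_iff mem_Sigma_iff)
  have disj: "\<forall>i\<in>{..<s}. \<forall>i'\<in>{..<s}. i \<noteq> i' \<longrightarrow> P (j,i) \<inter> P (j,i') = {}"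
    using G j unfolding good_def by blast
  have "card (\<Union>i<s. P (j,i)) = (\<Sum>i<s. card (P (j,i)))"
    using card_UN_disjoint[OF _ fin disj] by simp
  then have cs: "(\<Sum>i<s. card (P (j,i))) = m" using G j unfolding good_def by simp
  have le: "\<And>i. i \<in> {..<s} \<Longrightarrow> card (P (j,i)) \<le> k"
    using good_card_le[OF G] j by simp
  have "(\<Sum>i<s. k - card (P (j,i))) = (\<Sum>i<s. k) - (\<Sum>i<s. card (P (j,i)))"
    by (rule sum_subtractf_nat) (use le in auto)
  then show ?thesis using cs by (simp add: mult.commute)
qed

lemma good_step:
  assumes G: "good s k M m P" and mn: "m < s * k"
  shows "\<exists>P'. good s k M (Suc m) P'"
proof -
  define n where "n = s * k"
  define \<Sigma> where "\<Sigma> = {..<M}\<times>{..<s}"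
  define U where "U = Pow {1..m}"
  define d where "d = dd n k m"
  define g where "g = (\<lambda>S::nat set. k - card S)"
  have fU: "finite U" unfolding U_def by simp
  have fS: "finite \<Sigma>" unfolding \<Sigma>_def by simp
  have PU: "\<And>\<sigma>. \<sigma> \<in> \<Sigma> \<Longrightarrow> P \<sigma> \<in> U" using G unfolding good_def U_def \<Sigma>_def by blast
  have cntU: "\<And>S. S \<in> U \<Longrightarrow> card {\<sigma>\<in>\<Sigma>. P \<sigma> = S} = cnt n k m S"
    using G unfolding good_def U_def \<Sigma>_def n_def by blast
  have cd: "\<And>S. cnt n k m S * g S = (n - m) * d S"
    using cnt_dd[of m n k] mn unfolding n_def d_def g_def by simp
  have row: "\<And>j. j < M \<Longrightarrow> (\<Sum>i<s. g (P (j,i))) = n - m"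
    using good_row_sum[OF G] unfolding g_def n_def by simp
  have fib: "\<And>Z. Z \<subseteq> U \<Longrightarrow> (\<Sum>\<sigma>\<in>{\<sigma>\<in>\<Sigma>. P \<sigma> \<in> Z}. g (P \<sigma>)) = (n - m) * sum d Z"
  proof -
    fix Z assume Z: "Z \<subseteq> U"
    have fZ: "finite Z" using Z fU finite_subset by blast
    have "(\<Sum>\<sigma>\<in>{\<sigma>\<in>\<Sigma>. P \<sigma> \<in> Z}. g (P \<sigma>)) = (\<Sum>S\<in>Z. \<Sum>\<sigma>\<in>{\<sigma>\<in>{\<sigma>\<in>\<Sigma>. P \<sigma> \<in> Z}. P \<sigma> = S}. g (P \<sigma>))"
      by (rule sum.group[symmetric]) (use fS fZ in auto)
    also have "\<dots> = (\<Sum>S\<in>Z. \<Sum>\<sigma>\<in>{\<sigma>\<in>\<Sigma>. P \<sigma> = S}. g S)"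
    proof (rule sum.cong)
      fix S assume "S \<in> Z"
      then have "{\<sigma>\<in>{\<sigma>\<in>\<Sigma>. P \<sigma> \<in> Z}. P \<sigma> = S} = {\<sigma>\<in>\<Sigma>. P \<sigma> = S}" by auto
      then show "(\<Sum>\<sigma>\<in>{\<sigma>\<in>{\<sigma>\<in>\<Sigma>. P \<sigma> \<in> Z}. P \<sigma> = S}. g (P \<sigma>)) = (\<Sum>\<sigma>\<in>{\<sigma>\<in>\<Sigma>. P \<sigma> = S}. g S)"
        by simp
    qed simp
    also have "\<dots> = (\<Sum>S\<in>Z. cnt n k m S * g S)"
      by (rule sum.cong) (use cntU Z in auto)
    also have "\<dots> = (\<Sum>S\<in>Z. (n - m) * d S)" using cd by simp
    finally show "(\<Sum>\<sigma>\<in>{\<sigma>\<in>\<Sigma>. P \<sigma> \<in> Z}. g (P \<sigma>)) = (n - m) * sum d Z"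
      by (simp add: sum_distrib_left)
  qed
  have total: "(\<Sum>\<sigma>\<in>\<Sigma>. g (P \<sigma>)) = M * (n - m)"
  proof -
    have "(\<Sum>\<sigma>\<in>\<Sigma>. g (P \<sigma>)) = (\<Sum>j<M. \<Sum>i<s. g (P (j,i)))"
      unfolding \<Sigma>_def by (simp add: sum.cartesian_product)
    also have "\<dots> = (\<Sum>j<M. n - m)" using row by simp
    finally show ?thesis by simp
  qed
  have sumd: "sum d U = M"
  proof -
    have "{\<sigma>\<in>\<Sigma>. P \<sigma> \<in> U} = \<Sigma>" using PU by blast
    then have "(n - m) * sum d U = M * (n - m)" using fib[of U] total by (metis order_refl)
    moreover have "n - m > 0" using mn unfolding n_def by simp
    ultimately show ?thesis by (metis mult.commute mult_cancel_left not_gr0)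
  qed
  define N where "N = (\<lambda>j. {P (j,i) | i. i < s \<and> card (P (j,i)) < k})"
  have fN: "\<forall>j\<in>{..<M}. finite (N j)" unfolding N_def by simp
  have NU: "\<And>j. j < M \<Longrightarrow> N j \<subseteq> U" unfolding N_def using PU unfolding \<Sigma>_def by blast
  have Hall: "\<forall>X\<subseteq>{..<M}. card X \<le> sum d (\<Union>(N ` X))"
  proof (intro allI impI)
    fix X assume X: "X \<subseteq> {..<M}"
    define Z where "Z = \<Union>(N ` X)"
    have ZU: "Z \<subseteq> U" unfolding Z_def using NU X by blast
    have fX: "finite X" using X finite_subset by blast
    have "(\<Sum>j\<in>X. \<Sum>i<s. g (P (j,i))) = (\<Sum>j\<in>X. n - m)"
      by (rule sum.cong) (use row X in auto)
    then have "card X * (n - m) = (\<Sum>j\<in>X. \<Sum>i<s. g (P (j,i)))" by simp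
    also have "\<dots> = (\<Sum>\<sigma>\<in>X\<times>{..<s}. g (P \<sigma>))" by (simp add: sum.cartesian_product)
    also have "\<dots> = (\<Sum>\<sigma>\<in>{\<sigma>\<in>X\<times>{..<s}. P \<sigma> \<in> Z}. g (P \<sigma>))"
    proof (rule sum.mono_neutral_right)
      show "finite (X \<times> {..<s})" using fX by simp
      show "{\<sigma>\<in>X\<times>{..<s}. P \<sigma> \<in> Z} \<subseteq> X\<times>{..<s}" by blast
      show "\<forall>\<sigma>\<in>X \<times> {..<s} - {\<sigma>\<in>X\<times>{..<s}. P \<sigma> \<in> Z}. g (P \<sigma>) = 0"
      proof
        fix \<sigma> assume a: "\<sigma> \<in> X \<times> {..<s} - {\<sigma>\<in>X\<times>{..<s}. P \<sigma> \<in> Z}"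
        then obtain j i where ji: "\<sigma> = (j,i)" "j \<in> X" "i < s" "P (j,i) \<notin> Z" by auto
        have "\<not> card (P (j,i)) < k"
        proof
          assume "card (P (j,i)) < k"
          then have "P (j,i) \<in> N j" unfolding N_def using ji by blast
          then show False using ji unfolding Z_def by blast
        qed
        then show "g (P \<sigma>) = 0" unfolding g_def ji(1) by simp
      qed
    qed
    also have "\<dots> \<le> (\<Sum>\<sigma>\<in>{\<sigma>\<in>\<Sigma>. P \<sigma> \<in> Z}. g (P \<sigma>))"
      by (rule sum_mono2) (use fS X in \<open>auto simp: \<Sigma>_def\<close>)
    also have "\<dots> = (n - m) * sum d Z" using fib[OF ZU] .
    finally have "card X * (n - m) \<le> (n - m) * sum d Z" .
    then show "card X \<le> sum d (\<Union>(N ` X))" using mn unfolding Z_def n_def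
      by (simp add: mult.commute)
  qed
  obtain \<phi> where phi: "\<forall>j\<in>{..<M}. \<phi> j \<in> N j" "\<forall>S. card {j\<in>{..<M}. \<phi> j = S} \<le> d S"
    using hall_cap[OF _ fN Hall] by blast
  have exact: "\<And>S. S \<in> U \<Longrightarrow> card {j\<in>{..<M}. \<phi> j = S} = d S"
  proof (rule ccontr)
    fix S assume S: "S \<in> U" and ne: "card {j\<in>{..<M}. \<phi> j = S} \<noteq> d S"
    have lt: "card {j\<in>{..<M}. \<phi> j = S} < d S" using ne phi(2) le_neq_implies_less by blast
    have "(\<Sum>T\<in>U. card {j\<in>{..<M}. \<phi> j = T}) = (\<Sum>T\<in>U. \<Sum>j\<in>{j\<in>{..<M}. \<phi> j = T}. (1::nat))"
      by simp
    also have "\<dots> = (\<Sum>j\<in>{..<M}. (1::nat))"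
      by (rule sum.group) (use fU NU phi(1) in auto)
    finally have e: "(\<Sum>T\<in>U. card {j\<in>{..<M}. \<phi> j = T}) = M" by simp
    have "(\<Sum>T\<in>U. card {j\<in>{..<M}. \<phi> j = T}) < sum d U"
      by (rule sum_strict_mono_ex1) (use fU phi(2) S lt in auto)
    then show False using e sumd by simp
  qed
  have phiN: "\<And>j. j < M \<Longrightarrow> \<exists>i<s. P (j,i) = \<phi> j" using phi(1) unfolding N_def by blast
  define \<iota> where "\<iota> = (\<lambda>j. SOME i. i < s \<and> P (j,i) = \<phi> j)"
  have iota: "\<And>j. j < M \<Longrightarrow> \<iota> j < s \<and> P (j, \<iota> j) = \<phi> j"
    unfolding \<iota>_def using phiN by (metis (mono_tags, lifting) someI_ex)
  define P' where "P' = (\<lambda>\<sigma>. if snd \<sigma> = \<iota> (fst \<sigma>) then insert (Suc m) (P \<sigma>) else P \<sigma>)"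
  have Psub: "\<And>j i. j < M \<Longrightarrow> i < s \<Longrightarrow> P (j,i) \<subseteq> {1..m}"
    using G unfolding good_def by blast
  have c1: "\<forall>\<sigma>\<in>{..<M}\<times>{..<s}. P' \<sigma> \<subseteq> {1..Suc m}"
  proof
    fix \<sigma> assume "\<sigma> \<in> {..<M}\<times>{..<s}"
    then obtain j i where ji: "\<sigma> = (j,i)" "j < M" "i < s" by auto
    have "P (j,i) \<subseteq> {1..Suc m}" using Psub[OF ji(2,3)] by auto
    then show "P' \<sigma> \<subseteq> {1..Suc m}" unfolding P'_def ji(1) by auto
  qed
  have c2: "\<forall>j<M. \<forall>i<s. \<forall>i'<s. i \<noteq> i' \<longrightarrow> P' (j,i) \<inter> P' (j,i') = {}"
  proof (intro allI impI)
    fix j i i' assume a: "j < M" "i < s" "i' < s" "i \<noteq> i'"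
    have "P (j,i) \<inter> P (j,i') = {}" using G a unfolding good_def by blast
    moreover have "Suc m \<notin> P (j,i)" "Suc m \<notin> P (j,i')" using Psub a by fastforce+
    ultimately show "P' (j,i) \<inter> P' (j,i') = {}" unfolding P'_def using a(4) by auto
  qed
  have c3: "\<forall>j<M. (\<Union>i<s. P' (j,i)) = {1..Suc m}"
  proof (intro allI impI)
    fix j assume j: "j < M"
    have "(\<Union>i<s. P' (j,i)) = insert (Suc m) (\<Union>i<s. P (j,i))"
      using iota[OF j] unfolding P'_def by (auto split: if_splits)
    also have "\<dots> = insert (Suc m) {1..m}" using G j unfolding good_def by simp
    finally show "(\<Union>i<s. P' (j,i)) = {1..Suc m}" by auto
  qed
  define h where "h = (\<lambda>j. (j, \<iota> j))"
  have injh: "inj h" unfolding h_def by (simp add: inj_def)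
  have c4: "\<forall>S. S \<subseteq> {1..Suc m} \<longrightarrow> card {\<sigma>\<in>{..<M}\<times>{..<s}. P' \<sigma> = S} = cnt (s*k) k (Suc m) S"
  proof (intro allI impI)
    fix S assume S: "S \<subseteq> {1..Suc m}"
    show "card {\<sigma>\<in>{..<M}\<times>{..<s}. P' \<sigma> = S} = cnt (s*k) k (Suc m) S"
    proof (cases "Suc m \<in> S")
      case False
      have "S \<subseteq> {1..m}"
      proof
        fix x assume "x \<in> S"
        then show "x \<in> {1..m}" using S False by (cases "x = Suc m") auto
      qed
      then have SU: "S \<in> U" unfolding U_def by auto
      have eq: "{\<sigma>\<in>{..<M}\<times>{..<s}. P' \<sigma> = S} = {\<sigma>\<in>\<Sigma>. P \<sigma> = S} - h ` {j\<in>{..<M}. \<phi> j = S}"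
      proof (intro set_eqI iffI)
        fix \<sigma> assume "\<sigma> \<in> {\<sigma>\<in>{..<M}\<times>{..<s}. P' \<sigma> = S}"
        then show "\<sigma> \<in> {\<sigma>\<in>\<Sigma>. P \<sigma> = S} - h ` {j\<in>{..<M}. \<phi> j = S}"
          using False unfolding P'_def \<Sigma>_def h_def by (auto split: if_splits)
      next
        fix \<sigma> assume a: "\<sigma> \<in> {\<sigma>\<in>\<Sigma>. P \<sigma> = S} - h ` {j\<in>{..<M}. \<phi> j = S}"
        then obtain j i where ji: "\<sigma> = (j,i)" "j < M" "i < s" "P (j,i) = S" unfolding \<Sigma>_def by auto
        have "i \<noteq> \<iota> j"
        proof
          assume "i = \<iota> j"
          then have "\<sigma> \<in> h ` {j\<in>{..<M}. \<phi> j = S}" using ji iota[OF ji(2)] unfolding h_def by auto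
          then show False using a by blast
        qed
        then show "\<sigma> \<in> {\<sigma>\<in>{..<M}\<times>{..<s}. P' \<sigma> = S}" using ji unfolding P'_def by auto
      qed
      have sub: "h ` {j\<in>{..<M}. \<phi> j = S} \<subseteq> {\<sigma>\<in>\<Sigma>. P \<sigma> = S}"
        using iota unfolding h_def \<Sigma>_def by auto
      have "card {\<sigma>\<in>{..<M}\<times>{..<s}. P' \<sigma> = S} = card {\<sigma>\<in>\<Sigma>. P \<sigma> = S} - card (h ` {j\<in>{..<M}. \<phi> j = S})"
        unfolding eq by (rule card_Diff_subset) (use sub fS finite_subset in auto)
      also have "card (h ` {j\<in>{..<M}. \<phi> j = S}) = d S"
        using card_image[OF inj_on_subset[OF injh]] exact[OF SU] by simp
      also have "card {\<sigma>\<in>\<Sigma>. P \<sigma> = S} = cnt n k m S" using cntU[OF SU] .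
      finally show ?thesis using cnt_step1[of m n k S] mn unfolding d_def n_def by simp
    next
      case True
      define T where "T = S - {Suc m}"
      have TU: "T \<in> U" using S unfolding T_def U_def by auto
      have fT: "finite S" using S finite_subset by blast
      have cST: "card S = Suc (card T)" unfolding T_def using True fT
        by (metis card_Suc_Diff1)
      have eq: "{\<sigma>\<in>{..<M}\<times>{..<s}. P' \<sigma> = S} = h ` {j\<in>{..<M}. \<phi> j = T}"
      proof (intro set_eqI iffI)
        fix \<sigma> assume a: "\<sigma> \<in> {\<sigma>\<in>{..<M}\<times>{..<s}. P' \<sigma> = S}"
        then obtain j i where ji: "\<sigma> = (j,i)" "j < M" "i < s" "P' (j,i) = S" by auto
        have ps: "P (j,i) \<subseteq> {1..m}" using Psub ji by blast
        have ii: "i = \<iota> j"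
        proof (rule ccontr)
          assume "i \<noteq> \<iota> j"
          then have "P (j,i) = S" using ji unfolding P'_def by simp
          then show False using ps True by auto
        qed
        then have "insert (Suc m) (P (j,i)) = S" using ji unfolding P'_def by simp
        then have "P (j,i) = T" unfolding T_def using ps by auto
        then have "\<phi> j = T" using iota[OF ji(2)] ii by simp
        then show "\<sigma> \<in> h ` {j\<in>{..<M}. \<phi> j = T}" using ji ii unfolding h_def by auto
      next
        fix \<sigma> assume "\<sigma> \<in> h ` {j\<in>{..<M}. \<phi> j = T}"
        then obtain j where j: "\<sigma> = (j, \<iota> j)" "j < M" "\<phi> j = T" unfolding h_def by auto
        have "P (j, \<iota> j) = T" using iota[OF j(2)] j by simp
        then have "P' \<sigma> = S" unfolding P'_def j(1) T_def using True by auto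
        then show "\<sigma> \<in> {\<sigma>\<in>{..<M}\<times>{..<s}. P' \<sigma> = S}" using j iota by auto
      qed
      have "card {\<sigma>\<in>{..<M}\<times>{..<s}. P' \<sigma> = S} = d T"
        unfolding eq using card_image[OF inj_on_subset[OF injh]] exact[OF TU] by simp
      then show ?thesis using cnt_step2[OF cST] unfolding d_def n_def by simp
    qed
  qed
  have "good s k M (Suc m) P'" unfolding good_def using c1 c2 c3 c4 by blast
  then show ?thesis by blast
qed

lemma good_base:
  assumes k: "k \<ge> 1" and M: "M = (s*k - 1) choose (k - 1)"
  shows "good s k M 0 (\<lambda>_. {})"
proof -
  have "k * ((s*k) choose k) = (s*k) * ((s*k - 1) choose (k - 1))"
    using times_binomial_minus1_eq[of k "s*k"] k by simp
  then have "k * ((s*k) choose k) = k * (M * s)" unfolding M by (simp add: ac_simps)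
  then have e: "(s*k) choose k = M * s" using k by simp
  have "card ({..<M}\<times>{..<s}) = M * s" by (simp add: card_cartesian_product)
  then show ?thesis unfolding good_def cnt_def using e by auto
qed

lemma good_all:
  assumes k: "k \<ge> 1" and M: "M = (s*k - 1) choose (k - 1)"
  shows "m \<le> s*k \<Longrightarrow> \<exists>P. good s k M m P"
proof (induction m)
  case 0 then show ?case using good_base[OF k M] by blast
next
  case (Suc m)
  then obtain P where "good s k M m P" by auto
  then show ?case using good_step Suc.prems by auto
qed

lemma chi_le:
  assumes k: "k \<ge> 1"
  shows "chromatic_number (kneser_compl_vertices (s * k) k) kneser_compl_adj \<le> (s*k - 1) choose (k - 1)"
proof -
  define M where "M = (s*k - 1) choose (k - 1)"
  obtain P where G: "good s k M (s*k) P" using good_all[OF k M_def, of "s*k"] by auto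
  define \<Sigma> where "\<Sigma> = {..<M}\<times>{..<s}"
  define f where "f = (\<lambda>A. fst (SOME \<sigma>. \<sigma> \<in> \<Sigma> \<and> P \<sigma> = A))"
  have ex: "\<exists>\<sigma>. \<sigma> \<in> \<Sigma> \<and> P \<sigma> = A" if A: "A \<in> kneser_compl_vertices (s * k) k" for A
  proof -
    have "card {\<sigma>\<in>\<Sigma>. P \<sigma> = A} = cnt (s*k) k (s*k) A"
      using G A unfolding good_def kneser_compl_vertices_def \<Sigma>_def by blast
    also have "\<dots> = 1" using A unfolding cnt_def kneser_compl_vertices_def by simp
    finally obtain x where "{\<sigma>\<in>\<Sigma>. P \<sigma> = A} = {x}" by (rule card_1_singletonE)
    then show ?thesis by blast
  qed
  have fs: "f A \<in> {..<M} \<and> (\<exists>i<s. P (f A, i) = A)" if A: "A \<in> kneser_compl_vertices (s * k) k" for A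
  proof -
    have "(SOME \<sigma>. \<sigma> \<in> \<Sigma> \<and> P \<sigma> = A) \<in> \<Sigma> \<and> P (SOME \<sigma>. \<sigma> \<in> \<Sigma> \<and> P \<sigma> = A) = A"
      using someI_ex[OF ex[OF A]] .
    moreover obtain j i where "(SOME \<sigma>. \<sigma> \<in> \<Sigma> \<and> P \<sigma> = A) = (j,i)" by fastforce
    ultimately show ?thesis unfolding f_def \<Sigma>_def by auto
  qed
  have "proper_colouring (kneser_compl_vertices (s * k) k) kneser_compl_adj M f"
    unfolding proper_colouring_def
  proof (intro conjI ballI impI)
    fix v assume "v \<in> kneser_compl_vertices (s * k) k"
    then show "f v < M" using fs by blast
  next
    fix u v assume u: "u \<in> kneser_compl_vertices (s * k) k" and v: "v \<in> kneser_compl_vertices (s * k) k"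
      and adj: "kneser_compl_adj u v"
    show "f u \<noteq> f v"
    proof
      assume eq: "f u = f v"
      obtain i where i: "i < s" "P (f u, i) = u" using fs[OF u] by blast
      obtain i' where i': "i' < s" "P (f u, i') = v" using fs[OF v] eq by auto
      have ne: "u \<noteq> v" "u \<inter> v \<noteq> {}" using adj unfolding kneser_compl_adj_def by auto
      then have "i \<noteq> i'" using i i' by auto
      then have "P (f u, i) \<inter> P (f u, i') = {}" using G fs[OF u] i i' unfolding good_def by blast
      then show False using i i' ne by simp
    qed
  qed
  then show ?thesis unfolding chromatic_number_def M_def by (rule Least_le[where P="\<lambda>c. \<exists>f. proper_colouring _ _ c f", OF exI])
qed

lemma clique_exists:
  assumes k: "k \<ge> 1" and s: "s \<ge> 1"
  shows "\<exists>e. inj_on e {..<((s*k - 1) choose (k - 1))} \<and>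
     (\<forall>i<((s*k - 1) choose (k - 1)). e i \<in> kneser_compl_vertices (s * k) k \<and> 1 \<in> e i)"
proof -
  define M where "M = (s*k - 1) choose (k - 1)"
  define C where "C = {A \<in> kneser_compl_vertices (s * k) k. 1 \<in> A}"
  define B where "B = {B. B \<subseteq> {2..s*k} \<and> card B = k - 1}"
  have cB: "card B = M" unfolding B_def M_def using n_subsets[of "{2..s*k}" "k-1"] by simp
  have inj: "inj_on (insert 1) B"
  proof (rule inj_onI)
    fix X Y assume "X \<in> B" "Y \<in> B" and e: "insert 1 X = insert 1 Y"
    then have "1 \<notin> X" "1 \<notin> Y" unfolding B_def by auto
    then show "X = Y" using e by (metis Diff_insert_absorb)
  qed
  have sub: "insert 1 ` B \<subseteq> C"
  proof
    fix A assume "A \<in> insert 1 ` B"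
    then obtain X where X: "X \<subseteq> {2..s*k}" "card X = k - 1" "A = insert 1 X" unfolding B_def by auto
    have fX: "finite X" using X(1) finite_subset by blast
    have "1 \<notin> X" using X(1) by auto
    then have "card A = k" using X fX k by simp
    moreover have "A \<subseteq> {1..s*k}"
    proof -
      have "1 * 1 \<le> s * k" using s k by (rule mult_le_mono)
      then show ?thesis using X(1,3) by auto
    qed
    ultimately show "A \<in> C" unfolding C_def kneser_compl_vertices_def using X(3) by auto
  qed
  have fC: "finite C" unfolding C_def kneser_compl_vertices_def
    by (rule finite_subset[of _ "Pow {1..s*k}"]) auto
  have "M \<le> card C" using card_mono[OF fC sub] card_image[OF inj] cB by simp
  obtain h where h: "bij_betw h {0..<card C} C" using ex_bij_betw_nat_finite[OF fC] by blast
  have "{..<M} \<subseteq> {0..<card C}" using \<open>M \<le> card C\<close> by auto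
  then have "inj_on h {..<M}" "h ` {..<M} \<subseteq> C" using h unfolding bij_betw_def
    by (auto intro: inj_on_subset)
  then show ?thesis unfolding M_def C_def by blast
qed

lemma signed_minor_bound:
  assumes "signed_minor {..<t} EH \<pi> V E \<sigma>" "finite V"
  shows "t \<le> card V"
proof -
  obtain sw B where B: "\<forall>x\<in>{..<t}. B x \<subseteq> V \<and> connected_in (B x) (\<lambda>u v. E u v \<and> switched_sign \<sigma> sw u v)"
     "\<forall>x\<in>{..<t}. \<forall>y\<in>{..<t}. x \<noteq> y \<longrightarrow> B x \<inter> B y = {}"
    using assms(1) unfolding signed_minor_def by blast
  define r where "r = (\<lambda>x. SOME u. u \<in> B x)"
  have r: "\<And>x. x < t \<Longrightarrow> r x \<in> B x \<and> r x \<in> V"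
  proof -
    fix x assume x: "x < t"
    then have "B x \<noteq> {}" using B(1) unfolding connected_in_def by auto
    then have "r x \<in> B x" unfolding r_def by (simp add: some_in_eq)
    then show "r x \<in> B x \<and> r x \<in> V" using B(1) x by auto
  qed
  have "inj_on r {..<t}"
  proof (rule inj_onI)
    fix x y assume "x \<in> {..<t}" "y \<in> {..<t}" "r x = r y"
    then show "x = y"
    proof -
      assume a: "x \<in> {..<t}" "y \<in> {..<t}" "r x = r y"
      show "x = y"
      proof (rule ccontr)
        assume "x \<noteq> y"
        then have "B x \<inter> B y = {}" using B(2) a by blast
        moreover have "r x \<in> B x" "r y \<in> B y" using r a(1,2) by simp_all
        ultimately show False using a(3) by auto
      qed
    qed
  qed
  moreover have "r ` {..<t} \<subseteq> V" using r by auto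
  ultimately have "card {..<t} \<le> card V" by (rule card_inj_on_le[OF _ _ assms(2)])
  then show ?thesis by simp
qed

theorem lemma2p2:
  fixes s k :: nat
  assumes "s \<ge> 2" and "k \<ge> 2"
  shows "chromatic_number (kneser_compl_vertices (s * k) k) kneser_compl_adj
           \<le> odd_hadwiger (kneser_compl_vertices (s * k) k) kneser_compl_adj
         \<and> strongly_1_shallow_minor (kneser_compl_vertices (s * k) k) kneser_compl_adj
             (chromatic_number (kneser_compl_vertices (s * k) k) kneser_compl_adj)"
proof -
  define V where "V = kneser_compl_vertices (s * k) k"
  define M where "M = (s*k - 1) choose (k - 1)"
  have k1: "k \<ge> 1" and s1: "s \<ge> 1" using assms by auto
  have chi: "chromatic_number V kneser_compl_adj \<le> M"
    using chi_le[OF k1] unfolding V_def M_def .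
  obtain e where e: "inj_on e {..<M}" "\<forall>i<M. e i \<in> V \<and> 1 \<in> e i"
    using clique_exists[OF k1 s1] unfolding V_def M_def by blast
  have adj: "kneser_compl_adj (e i) (e j)" if "i < M" "j < M" "i \<noteq> j" for i j
  proof -
    have "e i \<noteq> e j" using e(1) that by (meson inj_on_def lessThan_iff)
    moreover have "1 \<in> e i \<inter> e j" using e(2) that by auto
    ultimately show ?thesis unfolding kneser_compl_adj_def by blast
  qed
  have fV: "finite V" unfolding V_def kneser_compl_vertices_def
    by (rule finite_subset[of _ "Pow {1..s*k}"]) auto
  have sh: "strongly_1_shallow_minor V kneser_compl_adj t" if t: "t \<le> M" for t
  proof -
    have A: "\<forall>i<t. e i \<in> V \<and> {} \<subseteq> V \<and> finite {} \<and> e i \<notin> {} \<and> (\<forall>l\<in>{}. kneser_compl_adj (e i) l)"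
      using e(2) t by auto
    have B: "\<forall>i<t. \<forall>j<t. i \<noteq> j \<longrightarrow> insert (e i) {} \<inter> insert (e j) {} = {}"
    proof (intro allI impI)
      fix i j assume ij: "i < t" "j < t" "i \<noteq> j"
      then have "e i \<noteq> e j" using e(1) t by (meson inj_on_def lessThan_iff less_le_trans)
      then show "insert (e i) {} \<inter> insert (e j) {} = {}" by auto
    qed
    have C: "\<forall>i<t. \<forall>j<t. i \<noteq> j \<longrightarrow> (\<exists>u\<in>bag_ports (e i) {}. \<exists>v\<in>bag_ports (e j) {}. kneser_compl_adj u v)"
    proof (intro allI impI)
      fix i j assume ij: "i < t" "j < t" "i \<noteq> j"
      then have "kneser_compl_adj (e i) (e j)" using adj t by auto
      then show "\<exists>u\<in>bag_ports (e i) {}. \<exists>v\<in>bag_ports (e j) {}. kneser_compl_adj u v"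
        unfolding bag_ports_def by simp
    qed
    show ?thesis unfolding strongly_1_shallow_minor_def
      by (rule exI[of _ e], rule exI[of _ "\<lambda>_. {}"], intro conjI A B C)
  qed
  have sm: "signed_minor {..<M} (\<lambda>x y. x \<noteq> y) (\<lambda>_ _. False) V kneser_compl_adj (\<lambda>_ _. False)"
    unfolding signed_minor_def
  proof (intro exI[of _ "\<lambda>_. False"] exI[of _ "\<lambda>x. {e x}"] conjI ballI impI)
    fix x assume "x \<in> {..<M}"
    then show "{e x} \<subseteq> V" using e(2) by auto
  next
    fix x
    show "connected_in {e x} (\<lambda>u v. kneser_compl_adj u v \<and> switched_sign (\<lambda>_ _. False) (\<lambda>_. False) u v)"
      unfolding connected_in_def by auto
  next
    fix x y assume "x \<in> {..<M}" "y \<in> {..<M}" "x \<noteq> y"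
    then show "{e x} \<inter> {e y} = {}" using e(1) by (auto simp: inj_on_def)
  next
    fix x y assume xy: "x \<in> {..<M}" "y \<in> {..<M}" "x \<noteq> y"
    then have "kneser_compl_adj (e x) (e y)" using adj by auto
    then show "\<exists>u\<in>{e x}. \<exists>v\<in>{e y}. kneser_compl_adj u v \<and>
                 switched_sign (\<lambda>_ _. False) (\<lambda>_. False) u v = False"
      unfolding switched_sign_def by simp
  qed
  have hM: "M \<le> odd_hadwiger V kneser_compl_adj"
    unfolding odd_hadwiger_def
  proof (rule Greatest_le_nat[where P="\<lambda>t. signed_minor {..<t} (\<lambda>x y. x \<noteq> y) (\<lambda>_ _. False) V kneser_compl_adj (\<lambda>_ _. False)" and b="card V"])
    show "signed_minor {..<M} (\<lambda>x y. x \<noteq> y) (\<lambda>_ _. False) V kneser_compl_adj (\<lambda>_ _. False)" by (rule sm)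
    fix tt :: nat assume "signed_minor {..<tt} (\<lambda>x y. x \<noteq> y) (\<lambda>_ _. False) V kneser_compl_adj (\<lambda>_ _. False)"
    then show "tt \<le> card V" using signed_minor_bound fV by blast
  qed
  show ?thesis using chi hM sh[OF chi] unfolding V_def by simp
qed

end
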